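(* Let $\mathbf{k}$ be a field and $\Delta$ a $(d-1)$-dimensional simplicial complex with $n$ vertices and upper skips $Q_0<\dots<Q_{d-1}$. Then $$f_{d-1}(\Delta)\le\frac{d}{Q_{d-1}(\Delta)}\binom{n}{d}.$$
   Context: A simplicial complex on $[n]$ is a family of subsets closed under subsets containing all singletons; $f_i$ counts faces of size $i+1$. With $M_i=\max\{|W|:W\subseteq[n],\ \tilde H_{|W|-i-1}(\Delta[W];\mathbf{k})\ne0\}$ (maximal shifts of the minimal free resolution of the Stanley–Reisner ring), $M_1<\dots<M_{n-d}$ lie in $\{2,\dots,n\}$ and the $d$ remaining elements of $[n]$ are the upper skips $Q_0=1<Q_1<\dots<Q_{d-1}$. *)

theory Defs
  imports Complex_Main
begin

definition simplicial_complex :: "nat \<Rightarrow> nat set set \<Rightarrow> bool" where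
  "simplicial_complex n K \<longleftrightarrow>
     K \<subseteq> Pow {1..n} \<and> (\<forall>F\<in>K. \<forall>G. G \<subseteq> F \<longrightarrow> G \<in> K) \<and>
     (\<forall>v\<in>{1..n}. {v} \<in> K) \<and> {} \<in> K"

definition fvec :: "nat set set \<Rightarrow> nat \<Rightarrow> nat" where
  "fvec K i = card {F\<in>K. card F = i + 1}"

definition induced :: "nat set set \<Rightarrow> nat set \<Rightarrow> nat set set" where
  "induced K W = {F\<in>K. F \<subseteq> W}"

text \<open>Faces of dimension j (size j+1), j an integer (j = -1 gives the empty face).\<close>
definition faces_dim :: "nat set set \<Rightarrow> int \<Rightarrow> nat set set" where
  "faces_dim K j = {F\<in>K. int (card F) = j + 1}"

text \<open>Simplicial j-chains with coefficients in the field 'k, faces oriented by the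
natural order on vertices.\<close>
definition chains :: "'k::field itself \<Rightarrow> nat set set \<Rightarrow> int \<Rightarrow> (nat set \<Rightarrow> 'k) set" where
  "chains _ K j = {c. \<forall>F. c F \<noteq> 0 \<longrightarrow> F \<in> faces_dim K j}"

text \<open>Augmented simplicial boundary: the coefficient of G in the boundary of the
oriented simplex G \<union> {v} is (-1)^(number of vertices of G below v).\<close>
definition bd :: "nat set set \<Rightarrow> (nat set \<Rightarrow> 'k::field) \<Rightarrow> nat set \<Rightarrow> 'k" where
  "bd K c G = (\<Sum>v\<in>{v\<in>\<Union>K. v \<notin> G \<and> insert v G \<in> K}.
                 (-1) ^ card {u\<in>G. u < v} * c (insert v G))"

text \<open>Reduced simplicial homology H~_j(K; k) is nonzero: some j-cycle is not a j-boundary.\<close>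
definition rhom_nonzero :: "'k::field itself \<Rightarrow> nat set set \<Rightarrow> int \<Rightarrow> bool" where
  "rhom_nonzero T K j \<longleftrightarrow>
     (\<exists>c\<in>chains T K j. (\<forall>G. bd K c G = 0) \<and>
        \<not> (\<exists>b\<in>chains T K (j + 1). c = bd K b))"

definition maxshift :: "'k::field itself \<Rightarrow> nat \<Rightarrow> nat set set \<Rightarrow> nat \<Rightarrow> nat" where
  "maxshift T n K i = Max {card W | W. W \<subseteq> {1..n} \<and>
        rhom_nonzero T (induced K W) (int (card W) - int i - 1)}"

text \<open>Upper skips: the elements of [n] not among M_1,...,M_(n-d), in increasing order;
upper_skip T n d K j = Q_j.\<close>
definition upper_skips :: "'k::field itself \<Rightarrow> nat \<Rightarrow> nat \<Rightarrow> nat set set \<Rightarrow> nat set" where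
  "upper_skips T n d K = {1..n} - {maxshift T n K i | i. 1 \<le> i \<and> i \<le> n - d}"

definition upper_skip :: "'k::field itself \<Rightarrow> nat \<Rightarrow> nat \<Rightarrow> nat set set \<Rightarrow> nat \<Rightarrow> nat" where
  "upper_skip T n d K j = sorted_list_of_set (upper_skips T n d K) ! j"

end

theory Submission imports Defs "HOL-Library.Function_Algebras" begin

definition sg :: "nat \<Rightarrow> nat set \<Rightarrow> 'k::field" where
  "sg v G = (-1) ^ card {u\<in>G. u < v}"

definition Dop :: "nat set \<Rightarrow> (nat set \<Rightarrow> 'k::field) \<Rightarrow> nat set \<Rightarrow> 'k" where
  "Dop W c G = (\<Sum>v\<in>W-G. sg v G * c (insert v G))"

lemma sg_nonzero: "sg v G \<noteq> (0::'k::field)"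
  by (simp add: sg_def)

lemma sg_swap:
  assumes "v < u" "v \<notin> G" "u \<notin> G"
  shows "sg v G * sg u (insert v G) + sg u G * sg v (insert u G) = (0::'k::field)"
proof -
  have e1: "{x\<in>insert v G. x < u} = insert v {x\<in>G. x < u}" using assms by auto
  have f: "finite {x\<in>G. x < u}" by (rule finite_subset[of _ "{..<u}"]) auto
  have c1: "card {x\<in>insert v G. x < u} = Suc (card {x\<in>G. x < u})"
    unfolding e1 using f assms by simp
  have e2: "{x\<in>insert u G. x < v} = {x\<in>G. x < v}" using assms by auto
  show ?thesis unfolding sg_def c1 e2 by simp
qed

lemma sum_apply_fun: "(sum f A) x = sum (\<lambda>a. f a x) A"
  by (induction A rule: infinite_finite_induct) auto

lemma DD:
  assumes "finite W"
  shows "Dop W (Dop W c) G = (0::'k::field)"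
proof -
  define g where "g = (\<lambda>v u. sg v G * sg u (insert v G) * (c (insert u (insert v G)) :: 'k))"
  define P where "P = Sigma (W-G) (\<lambda>v. W-G-{v})"
  have finP: "finite P" unfolding P_def using assms by auto
  have "Dop W (Dop W c) G = (\<Sum>v\<in>W-G. \<Sum>u\<in>W-G-{v}. g v u)"
    unfolding Dop_def g_def
    by (rule sum.cong) (auto simp: sum_distrib_left mult.assoc intro!: sum.cong)
  also have "\<dots> = (\<Sum>p\<in>P. g (fst p) (snd p))"
    unfolding P_def using assms by (subst sum.Sigma) (auto simp: case_prod_beta)
  also have "\<dots> = (\<Sum>p\<in>{p\<in>P. fst p < snd p}. g (fst p) (snd p)) + (\<Sum>p\<in>{p\<in>P. snd p < fst p}. g (fst p) (snd p))"
  proof -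
    have "P = {p\<in>P. fst p < snd p} \<union> {p\<in>P. snd p < fst p}" unfolding P_def by auto
    then show ?thesis using finP by (subst sum.union_disjoint[symmetric]) auto
  qed
  also have "(\<Sum>p\<in>{p\<in>P. snd p < fst p}. g (fst p) (snd p)) = (\<Sum>p\<in>{p\<in>P. fst p < snd p}. g (snd p) (fst p))"
  proof -
    have "{p\<in>P. snd p < fst p} = prod.swap ` {p\<in>P. fst p < snd p}"
      unfolding P_def by (auto simp: image_iff)
    then show ?thesis by (simp add: sum.reindex)
  qed
  also have "(\<Sum>p\<in>{p\<in>P. fst p < snd p}. g (fst p) (snd p)) + \<dots> = (\<Sum>p\<in>{p\<in>P. fst p < snd p}. g (fst p) (snd p) + g (snd p) (fst p))"
    by (simp add: sum.distrib)
  also have "\<dots> = 0"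
  proof (rule sum.neutral, safe)
    fix v u assume "(v,u) \<in> P" "fst (v,u) < snd (v,u)"
    then have h: "v < u" "v \<notin> G" "u \<notin> G" unfolding P_def by auto
    have "insert v (insert u G) = insert u (insert v G)" by auto
    then have "g v u + g u v = (sg v G * sg u (insert v G) + sg u G * sg v (insert u G)) * c (insert u (insert v G))"
      unfolding g_def by (simp add: algebra_simps)
    then show "g (fst (v,u)) (snd (v,u)) + g (snd (v,u)) (fst (v,u)) = 0"
      using sg_swap[OF h, where 'k='k] by simp
  qed
  finally show ?thesis .
qed


lemma Dop_lin:
  assumes "finite I"
  shows "Dop W (\<lambda>X. \<Sum>i\<in>I. a i * f i X) G = (\<Sum>i\<in>I. a i * Dop W (f i) G)"
  unfolding Dop_def by (simp add: sum_distrib_left mult_ac sum.swap[of _ I])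

lemma Dop_diff: "Dop W (\<lambda>X. f X - g X) G = Dop W f G - Dop W g G"
  unfolding Dop_def by (simp add: right_diff_distrib sum_subtractf)

lemma vs_fun: "vector_space (\<lambda>(a::'k::field) (f::'a \<Rightarrow> 'k) x. a * f x)"
  by unfold_locales (auto simp: fun_eq_iff algebra_simps)

lemma rank_bound:
  fixes F :: "nat set set" and W :: "nat set"
  assumes finW: "finite W" and wW: "w \<in> W"
    and Fsub: "\<And>\<sigma>. \<sigma> \<in> F \<Longrightarrow> \<sigma> \<subseteq> W \<and> card \<sigma> = d"
    and acyc: "\<And>c::nat set \<Rightarrow> 'k::field. (\<forall>X. c X \<noteq> 0 \<longrightarrow> X \<in> F) \<Longrightarrow> (\<forall>G. Dop W c G = 0) \<Longrightarrow> c = (\<lambda>_. 0)"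
  shows "card F \<le> (card W - 1) choose (d - 1)"
proof -
  interpret V: vector_space "\<lambda>(a::'k) (f::nat set \<Rightarrow> 'k) x. a * f x" by (rule vs_fun)
  define R :: "(nat set \<Rightarrow> 'k) \<Rightarrow> nat set \<Rightarrow> 'k" where
    "R = (\<lambda>c G. if w \<in> G then 0 else Dop W c G)"
  define \<delta> :: "nat set \<Rightarrow> nat set \<Rightarrow> 'k" where "\<delta> = (\<lambda>\<sigma> X. if X = \<sigma> then 1 else 0)"
  have finF: "finite F"
    by (rule finite_subset[of _ "Pow W"]) (use Fsub finW in auto)
  have key: "c = (\<lambda>_. 0)" if sup: "\<forall>X. c X \<noteq> 0 \<longrightarrow> X \<in> F" and R0: "R c = (\<lambda>_. 0)" for c
  proof -
    have e0: "Dop W c G = 0" if "w \<notin> G" for G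
      using fun_cong[OF R0, of G] that unfolding R_def by simp
    have "Dop W c H = 0" for H
    proof (cases "w \<in> H")
      case False then show ?thesis by (rule e0)
    next
      case True
      define G' where "G' = H - {w}"
      have ins: "insert w G' = H" using True unfolding G'_def by auto
      have wG: "w \<in> W - G'" using wW unfolding G'_def by auto
      have "0 = Dop W (Dop W c) G'" using DD[OF finW] by simp
      also have "\<dots> = sg w G' * Dop W c (insert w G') + (\<Sum>v\<in>W - G' - {w}. sg v G' * Dop W c (insert v G'))"
        unfolding Dop_def[of W "Dop W c"] using finW wG by (simp add: sum.remove)
      also have "(\<Sum>v\<in>W - G' - {w}. sg v G' * Dop W c (insert v G')) = 0"
        by (rule sum.neutral) (auto simp: G'_def intro!: e0)
      finally have "sg w G' * Dop W c H = 0" using ins by simp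
      then show ?thesis using sg_nonzero[of w G', where 'k='k] by simp
    qed
    then show ?thesis using acyc[OF sup] by blast
  qed
  have Rsum: "R (\<lambda>X. \<Sum>i\<in>I. a i * f i X) = (\<lambda>G. \<Sum>i\<in>I. a i * R (f i) G)" if "finite I" for I a f
    unfolding R_def using Dop_lin[OF that] by (auto simp: fun_eq_iff)
  have inj: "inj_on (\<lambda>\<sigma>. R (\<delta> \<sigma>)) F"
  proof (rule inj_onI)
    fix \<sigma> \<tau> assume s: "\<sigma> \<in> F" "\<tau> \<in> F" and eq: "R (\<delta> \<sigma>) = R (\<delta> \<tau>)"
    define c where "c = (\<lambda>X. \<delta> \<sigma> X - \<delta> \<tau> X)"
    have "R c G = R (\<delta> \<sigma>) G - R (\<delta> \<tau>) G" for G
      unfolding R_def c_def by (simp add: Dop_diff)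
    then have "R c = (\<lambda>_. 0)" using eq by (simp add: fun_eq_iff)
    moreover have "\<forall>X. c X \<noteq> 0 \<longrightarrow> X \<in> F" using s unfolding c_def \<delta>_def by auto
    ultimately have "c = (\<lambda>_. 0)" using key by blast
    then have "c \<sigma> = 0" by simp
    then show "\<sigma> = \<tau>" unfolding c_def \<delta>_def by (auto split: if_splits)
  qed
  define S where "S = (\<lambda>\<sigma>. R (\<delta> \<sigma>)) ` F"
  have indep: "V.independent S"
  proof
    assume "V.dependent S"
    then obtain t u where t: "finite t" "t \<subseteq> S" and s0: "(\<Sum>v\<in>t. (\<lambda>x. u v * v x)) = 0"
      and v0: "\<exists>v\<in>t. u v \<noteq> 0"
      unfolding V.dependent_explicit by blast
    define F' where "F' = {\<sigma>\<in>F. R (\<delta> \<sigma>) \<in> t}"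
    have finF': "finite F'" unfolding F'_def using finF by auto
    have tF': "t = (\<lambda>\<sigma>. R (\<delta> \<sigma>)) ` F'" using t(2) unfolding F'_def S_def by auto
    have injF': "inj_on (\<lambda>\<sigma>. R (\<delta> \<sigma>)) F'" using inj unfolding F'_def by (auto intro: inj_on_subset)
    define c where "c = (\<lambda>X. \<Sum>\<sigma>\<in>F'. u (R (\<delta> \<sigma>)) * \<delta> \<sigma> X)"
    have "R c = (\<lambda>G. \<Sum>\<sigma>\<in>F'. u (R (\<delta> \<sigma>)) * R (\<delta> \<sigma>) G)"
      unfolding c_def by (rule Rsum[OF finF'])
    also have "\<dots> = (\<lambda>G. \<Sum>v\<in>t. u v * v G)"
      unfolding tF' by (simp add: sum.reindex[OF injF'])
    also have "\<dots> = (\<lambda>_. 0)" proof (rule ext)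
      fix G show "(\<Sum>v\<in>t. u v * v G) = 0"
        using fun_cong[OF s0, of G] by (simp add: sum_apply_fun)
    qed
    finally have Rc: "R c = (\<lambda>_. 0)" .
    have cX: "c X = (if X \<in> F' then u (R (\<delta> X)) else 0)" for X
      unfolding c_def \<delta>_def using finF' by (simp add: if_distrib[of "\<lambda>x. _ * x"] sum.If_cases)
    have "\<forall>X. c X \<noteq> 0 \<longrightarrow> X \<in> F" using cX unfolding F'_def by auto
    then have "c = (\<lambda>_. 0)" using key Rc by blast
    then have "\<forall>\<sigma>\<in>F'. u (R (\<delta> \<sigma>)) = 0" using cX by (simp add: fun_eq_iff) (metis)
    then show False using v0 tF' by auto
  qed
  define B where "B = {G. G \<subseteq> W - {w} \<and> card G = d - 1}"
  have finB: "finite B" unfolding B_def using finW by auto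
  have cardB: "card B = (card W - 1) choose (d - 1)"
    unfolding B_def using finW wW by (simp add: n_subsets)
  have span: "S \<subseteq> V.span (\<delta> ` B)"
  proof
    fix f assume "f \<in> S"
    then obtain \<sigma> where \<sigma>: "\<sigma> \<in> F" "f = R (\<delta> \<sigma>)" unfolding S_def by auto
    have supp: "G \<in> B" if "f G \<noteq> 0" for G
    proof -
      from that have wG: "w \<notin> G" and "Dop W (\<delta> \<sigma>) G \<noteq> 0" using \<sigma> unfolding R_def by (auto split: if_splits)
      then obtain v where v0: "v \<in> W - G" "sg v G * \<delta> \<sigma> (insert v G) \<noteq> 0"
        unfolding Dop_def by (meson sum.not_neutral_contains_not_neutral)
      then have v: "v \<in> W - G" "\<delta> \<sigma> (insert v G) \<noteq> 0" by auto
      then have eq: "insert v G = \<sigma>" unfolding \<delta>_def by (auto split: if_splits)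
      have GW: "G \<subseteq> W" using Fsub[OF \<sigma>(1)] eq by auto
      have "finite G" using GW finW by (auto intro: finite_subset)
      then have "card G = d - 1" using Fsub[OF \<sigma>(1)] eq v(1) by auto
      then show ?thesis unfolding B_def using GW wG by auto
    qed
    have "f = (\<Sum>G\<in>B. (\<lambda>x. f G * \<delta> G x))"
    proof (rule ext)
      fix X
      have "(\<Sum>G\<in>B. (\<lambda>x. f G * \<delta> G x)) X = (\<Sum>G\<in>B. f G * \<delta> G X)" by (simp add: sum_apply_fun)
      also have "\<dots> = (if X \<in> B then f X else 0)"
        unfolding \<delta>_def using finB by (simp add: if_distrib[of "\<lambda>x. _ * x"] sum.If_cases)
      also have "\<dots> = f X" using supp by auto
      finally show "f X = (\<Sum>G\<in>B. (\<lambda>x. f G * \<delta> G x)) X" by simp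
    qed
    also have "\<dots> \<in> V.span (\<delta> ` B)"
      by (intro V.span_sum V.span_scale V.span_base) auto
    finally show "f \<in> V.span (\<delta> ` B)" .
  qed
  have "card S \<le> card (\<delta> ` B)"
    using V.independent_span_bound[OF _ indep span] finB by auto
  also have "\<dots> \<le> card B" using finB by (rule card_image_le)
  finally have "card S \<le> card B" .
  moreover have "card S = card F" unfolding S_def using inj by (rule card_image)
  ultimately show ?thesis using cardB by simp
qed


lemma chains_zero:
  assumes "\<forall>F\<in>K'. card F \<le> d" "j \<ge> int d" "c \<in> chains T K' j"
  shows "c = (\<lambda>_. 0)"
proof (rule ext, rule ccontr)
  fix F assume "c F \<noteq> 0"
  then have "F \<in> faces_dim K' j" using assms(3) unfolding chains_def by auto
  then show False using assms(1,2) unfolding faces_dim_def by force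
qed

lemma bd_zero: "bd K (\<lambda>_. 0::'k::field) = (\<lambda>_. 0)"
  unfolding bd_def by (simp add: fun_eq_iff)

lemma no_hom_high:
  assumes "\<forall>F\<in>K'. card F \<le> d" "j \<ge> int d"
  shows "\<not> rhom_nonzero (T::'k::field itself) K' j"
proof
  assume "rhom_nonzero T K' j"
  then obtain c where c: "c \<in> chains T K' j" and nb: "\<not> (\<exists>b\<in>chains T K' (j + 1). c = bd K' b)"
    unfolding rhom_nonzero_def by blast
  have "c = (\<lambda>_. 0)" by (rule chains_zero[OF assms c])
  moreover have "(\<lambda>_. 0::'k) \<in> chains T K' (j+1)" unfolding chains_def by simp
  moreover have "bd K' (\<lambda>_. 0::'k) = (\<lambda>_. 0)" by (rule bd_zero)
  ultimately have "\<exists>b\<in>chains T K' (j + 1). c = bd K' b" by (intro bexI[of _ "\<lambda>_. 0::'k"]) auto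
  then show False using nb by blast
qed

lemma bd_Dop:
  assumes "c \<in> chains T (induced K W) j" "finite W"
  shows "bd (induced K W) c G = Dop W c G"
proof -
  let ?K = "induced K W"
  have I: "{v\<in>\<Union>?K. v \<notin> G \<and> insert v G \<in> ?K} = {v\<in>W - G. insert v G \<in> ?K}"
    unfolding induced_def by auto
  have "bd ?K c G = (\<Sum>v\<in>{v\<in>W - G. insert v G \<in> ?K}. sg v G * c (insert v G))"
    unfolding bd_def I sg_def ..
  also have "\<dots> = Dop W c G" unfolding Dop_def
  proof (rule sum.mono_neutral_left)
    show "finite (W - G)" using assms(2) by auto
    show "\<forall>i\<in>W - G - {v \<in> W - G. insert v G \<in> ?K}. sg i G * c (insert i G) = 0"
      using assms(1) unfolding chains_def faces_dim_def by auto
  qed auto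
  finally show ?thesis .
qed

lemma count_sup:
  assumes "finite S" "F \<subseteq> S" "card F = d" "d \<le> q"
  shows "card {W. W \<subseteq> S \<and> card W = q \<and> F \<subseteq> W} = (card S - d) choose (q - d)"
proof -
  have finF: "finite F" using assms(1,2) finite_subset by auto
  have eq: "{W. W \<subseteq> S \<and> card W = q \<and> F \<subseteq> W} = (\<lambda>B. B \<union> F) ` {B. B \<subseteq> S - F \<and> card B = q - d}"
  proof (rule set_eqI, rule iffI)
    fix W assume "W \<in> {W. W \<subseteq> S \<and> card W = q \<and> F \<subseteq> W}"
    then have W: "W \<subseteq> S" "card W = q" "F \<subseteq> W" by auto
    have "finite W" using W(1) assms(1) finite_subset by auto
    then have "card (W - F) = q - d" using W assms(3) by (simp add: card_Diff_subset finF)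
    moreover have "W = (W - F) \<union> F" using W by auto
    ultimately show "W \<in> (\<lambda>B. B \<union> F) ` {B. B \<subseteq> S - F \<and> card B = q - d}"
      using W by blast
  next
    fix W assume "W \<in> (\<lambda>B. B \<union> F) ` {B. B \<subseteq> S - F \<and> card B = q - d}"
    then obtain B where B: "B \<subseteq> S - F" "card B = q - d" "W = B \<union> F" by auto
    have "finite B" using B(1) assms(1) finite_subset by blast
    then have "card W = q" using B finF assms(3,4) by (subst B(3), subst card_Un_disjoint) auto
    then show "W \<in> {W. W \<subseteq> S \<and> card W = q \<and> F \<subseteq> W}" using B assms(2) by auto
  qed
  have inj: "inj_on (\<lambda>B. B \<union> F) {B. B \<subseteq> S - F \<and> card B = q - d}"
    by (rule inj_onI) blast
  have "card {W. W \<subseteq> S \<and> card W = q \<and> F \<subseteq> W} = card {B. B \<subseteq> S - F \<and> card B = q - d}"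
    unfolding eq by (rule card_image[OF inj])
  also have "\<dots> = card (S - F) choose (q - d)" using assms(1) by (simp add: n_subsets)
  also have "card (S - F) = card S - d" using assms finF by (simp add: card_Diff_subset)
  finally show ?thesis .
qed


theorem lemma4p7:
  fixes K :: "nat set set" and n d :: nat
  assumes "simplicial_complex n K"
    and "1 \<le> n"
    and "d = Max (card ` K)"
  shows "real (fvec K (d - 1))
           \<le> real d / real (upper_skip TYPE('k::field) n d K (d - 1)) * real (n choose d)"
proof -
  let ?T = "TYPE('k)"
  have Ksub: "K \<subseteq> Pow {1..n}" and sing: "\<forall>v\<in>{1..n}. {v} \<in> K"
    using assms(1) unfolding simplicial_complex_def by auto
  have finK: "finite K" using Ksub finite_subset by (metis finite_Pow_iff finite_atLeastAtMost)
  have oneK: "{1} \<in> K" using sing assms(2) by auto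
  have Kne: "card ` K \<noteq> {}" using oneK by auto
  have cardle: "\<forall>F\<in>K. card F \<le> d" using assms(3) finK by auto
  have d1: "1 \<le> d" using cardle oneK by force
  have "d \<in> card ` K" using assms(3) finK Kne by (simp add: Max_in)
  then obtain F0 where "F0 \<in> K" "card F0 = d" by auto
  then have dn: "d \<le> n" using Ksub by (metis PowD card_atLeastAtMost card_mono diff_Suc_1 finite_atLeastAtMost subsetD)
  define Mset where "Mset = (\<lambda>i. maxshift ?T n K i) ` {1..n-d}"
  define U where "U = upper_skips ?T n d K"
  have U: "U = {1..n} - Mset" unfolding U_def upper_skips_def Mset_def by auto
  have "card Mset \<le> n - d" unfolding Mset_def using card_image_le[of "{1..n-d}"] by auto
  then have "d \<le> card U" unfolding U using diff_card_le_card_Diff[of Mset "{1..n}"] Mset_def dn by auto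
  define q where "q = upper_skip ?T n d K (d - 1)"
  have "q \<in> set (sorted_list_of_set U)"
    unfolding q_def upper_skip_def U_def[symmetric] using \<open>d \<le> card U\<close> d1 by simp
  then have qU: "q \<in> U" unfolding U by simp
  then have q1: "1 \<le> q" "q \<le> n" and qM: "q \<notin> Mset" unfolding U by auto
  define Fd where "Fd = {F\<in>K. card F = d}"
  have fv: "fvec K (d - 1) = card Fd" unfolding fvec_def Fd_def using d1 by simp
  have finFd: "finite Fd" unfolding Fd_def using finK by simp
  show ?thesis
  proof (cases "q \<le> d")
    case True
    have "card Fd \<le> card {B. B \<subseteq> {1..n} \<and> card B = d}"
      by (rule card_mono) (use Ksub in \<open>auto simp: Fd_def\<close>)
    also have "\<dots> = n choose d" by (simp add: n_subsets)
    finally have "real (card Fd) \<le> real (n choose d)" by simp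
    also have "\<dots> \<le> real d / real q * real (n choose d)"
    proof -
      have "1 \<le> real d / real q" using True q1 by simp
      then have "1 * real (n choose d) \<le> real d / real q * real (n choose d)"
        by (intro mult_right_mono) auto
      then show ?thesis by simp
    qed
    finally show ?thesis unfolding fv q_def .
  next
    case False
    then have qd: "d < q" by simp
    have claim1: "\<not> rhom_nonzero ?T (induced K W) (int d - 1)" if W: "W \<subseteq> {1..n}" "card W = q" for W
    proof
      assume hom: "rhom_nonzero ?T (induced K W) (int d - 1)"
      define i where "i = q - d"
      define S where "S = {card W | W. W \<subseteq> {1..n} \<and> rhom_nonzero ?T (induced K W) (int (card W) - int i - 1)}"
      have qS: "q \<in> S" unfolding S_def i_def using W hom qd by (auto intro!: exI[of _ W])
      have Sle: "x \<le> q" if "x \<in> S" for x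
      proof (rule ccontr)
        assume "\<not> x \<le> q"
        from that obtain W' where W': "x = card W'" "rhom_nonzero ?T (induced K W') (int (card W') - int i - 1)"
          unfolding S_def by auto
        have "\<forall>F\<in>induced K W'. card F \<le> d" using cardle unfolding induced_def by auto
        moreover have "int (card W') - int i - 1 \<ge> int d" using \<open>\<not> x \<le> q\<close> W'(1) qd unfolding i_def by auto
        ultimately show False using no_hom_high W'(2) by blast
      qed
      have finS: "finite S" by (rule finite_subset[of _ "{..q}"]) (use Sle in auto)
      have "Max S = q" using qS Sle finS by (intro Max_eqI) auto
      then have "maxshift ?T n K i = q" unfolding maxshift_def S_def by simp
      moreover have "i \<in> {1..n-d}" unfolding i_def using qd q1 by auto
      ultimately show False using qM unfolding Mset_def by force
    qed
    have claim2: "card {F\<in>Fd. F \<subseteq> W} \<le> (q - 1) choose (d - 1)" if W: "W \<subseteq> {1..n}" "card W = q" for W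
    proof -
      have finW: "finite W" using W(1) finite_subset by blast
      then obtain w where wW: "w \<in> W" using W(2) q1 by fastforce
      have "card {F\<in>Fd. F \<subseteq> W} \<le> (card W - 1) choose (d - 1)"
      proof (rule rank_bound[OF finW wW, where 'k='k])
        fix \<sigma> assume "\<sigma> \<in> {F\<in>Fd. F \<subseteq> W}" then show "\<sigma> \<subseteq> W \<and> card \<sigma> = d" unfolding Fd_def by auto
      next
        fix c :: "nat set \<Rightarrow> 'k"
        assume sup: "\<forall>X. c X \<noteq> 0 \<longrightarrow> X \<in> {F\<in>Fd. F \<subseteq> W}" and cyc: "\<forall>G. Dop W c G = 0"
        have cch: "c \<in> chains ?T (induced K W) (int d - 1)"
          using sup unfolding chains_def faces_dim_def induced_def Fd_def by auto
        have "\<forall>G. bd (induced K W) c G = 0" using cyc bd_Dop[OF cch finW] by simp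
        then obtain b where b: "b \<in> chains ?T (induced K W) (int d - 1 + 1)" "c = bd (induced K W) b"
          using claim1[OF W] cch unfolding rhom_nonzero_def by blast
        have "\<forall>F\<in>induced K W. card F \<le> d" using cardle unfolding induced_def by auto
        moreover have "int d \<le> int d - 1 + 1" by simp
        ultimately have "b = (\<lambda>_. 0)" using b(1) by (rule chains_zero)
        then show "c = (\<lambda>_. 0)" using b(2) bd_zero[of "induced K W", where 'k='k] by simp
      qed
      then show ?thesis using W(2) by simp
    qed
    define Wq where "Wq = {W. W \<subseteq> {1..n} \<and> card W = q}"
    have finWq: "finite Wq" unfolding Wq_def by simp
    have "card Fd * ((n - d) choose (q - d)) = (\<Sum>F\<in>Fd. card {W\<in>Wq. F \<subseteq> W})"
    proof -
      have "card {W\<in>Wq. F \<subseteq> W} = (n - d) choose (q - d)" if "F \<in> Fd" for F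
      proof -
        have "{W\<in>Wq. F \<subseteq> W} = {W. W \<subseteq> {1..n} \<and> card W = q \<and> F \<subseteq> W}" unfolding Wq_def by auto
        moreover have "F \<subseteq> {1..n}" "card F = d" using that Ksub unfolding Fd_def by auto
        ultimately show ?thesis using count_sup[of "{1..n}" F d q] qd by simp
      qed
      then show ?thesis by simp
    qed
    also have "\<dots> = (\<Sum>F\<in>Fd. \<Sum>W\<in>Wq. if F \<subseteq> W then 1 else 0)"
      using finWq by (simp add: sum.If_cases Int_def)
    also have "\<dots> = (\<Sum>W\<in>Wq. \<Sum>F\<in>Fd. if F \<subseteq> W then 1 else 0)" by (rule sum.swap)
    also have "\<dots> = (\<Sum>W\<in>Wq. card {F\<in>Fd. F \<subseteq> W})"
      using finFd by (simp add: sum.If_cases Int_def)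
    also have "\<dots> \<le> (\<Sum>W\<in>Wq. (q - 1) choose (d - 1))"
      by (rule sum_mono) (use claim2 in \<open>auto simp: Wq_def\<close>)
    also have "\<dots> = (n choose q) * ((q - 1) choose (d - 1))" unfolding Wq_def by (simp add: n_subsets)
    finally have ineq: "card Fd * ((n - d) choose (q - d)) \<le> (n choose q) * ((q - 1) choose (d - 1))" .
    have b1: "(n choose q) * (q choose d) = (n choose d) * ((n - d) choose (q - d))"
      using choose_mult[of d q n] qd q1 by simp
    have b2: "d * (q choose d) = q * ((q - 1) choose (d - 1))"
      using times_binomial_minus1_eq[of d q] d1 by simp
    have "card Fd * ((n - d) choose (q - d)) * q \<le> (n choose q) * ((q - 1) choose (d - 1)) * q"
      using ineq by simp
    also have "\<dots> = (n choose q) * (q choose d) * d" using b2 by (simp add: mult_ac)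
    also have "\<dots> = (n choose d) * d * ((n - d) choose (q - d))" using b1 by (simp add: mult_ac)
    finally have "(card Fd * q) * ((n - d) choose (q - d)) \<le> ((n choose d) * d) * ((n - d) choose (q - d))"
      by (simp add: mult_ac)
    moreover have "0 < (n - d) choose (q - d)" using q1 qd by simp
    ultimately have "card Fd * q \<le> (n choose d) * d" by simp
    then have "real (card Fd) * real q \<le> real (n choose d) * real d" by (metis of_nat_le_iff of_nat_mult)
    then have "real (card Fd) \<le> real d / real q * real (n choose d)"
      using q1 by (simp add: field_simps)
    then show ?thesis unfolding fv q_def .
  qed
qed

end
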